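(* For every $N\ge1$ and all complex numbers $z_1,\dots,z_N$, $$\prod_{i=1}^N\|x-z_i\|\le\sqrt{\frac{e^N}{N+1}}\,\Big\|\prod_{i=1}^N(x-z_i)\Big\|,$$ where $\|\cdot\|$ is the Bombieri–Weyl norm.
   Context: The Bombieri–Weyl norm of a univariate polynomial $P(z)=\sum_{i=0}^N a_iz^i$ of degree $N$ is $\|P\|=\big(\sum_{i=0}^N\binom{N}{i}^{-1}|a_i|^2\big)^{1/2}$ (so in particular $\|x-z\|=\sqrt{1+|z|^2}$). *)

theory Defs
  imports "HOL-Analysis.Analysis" "HOL-Computational_Algebra.Polynomial"
begin

definition bw_norm :: "complex poly \<Rightarrow> real" where
  "bw_norm P = sqrt (\<Sum>i\<le>degree P. (cmod (coeff P i))\<^sup>2 / real (degree P choose i))"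

end

theory Submission
  imports Defs
begin


definition n2 :: "nat \<Rightarrow> complex poly \<Rightarrow> real" where
  "n2 D f = (\<Sum>k\<le>D. (cmod (coeff f k))^2)"

lemma term_id:
  "cmod(b*y + a*x)^2 - cmod(cnj a * y + cnj b * x)^2 = (cmod b^2 - cmod a^2)*(cmod y^2 - cmod x^2)"
  by (simp only: cmod_power2) (simp add: power2_eq_square algebra_simps)

lemma coeff_lin_mult0: "coeff ([:b,a:] * h) 0 = b * coeff h 0"
  by simp
lemma coeff_lin_multS: "coeff ([:b,a:] * h) (Suc j) = b * coeff h (Suc j) + a * coeff h j"
  by (simp add: coeff_pCons')

lemma flip:
  assumes "degree h < D"
  shows "n2 D ([:b,a:]*h) = n2 D ([:cnj a, cnj b:]*h)"
proof -
  obtain m where D: "D = Suc m" using assms by (cases D) auto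
  have hD: "coeff h (Suc m) = 0" using assms D by (simp add: coeff_eq_0)
  have e: "n2 D ([:b',a':]*h) = (cmod (b' * coeff h 0))^2 + (\<Sum>j\<le>m. (cmod (b' * coeff h (Suc j) + a' * coeff h j))^2)" for a' b'
    unfolding n2_def D by (subst sum.atMost_Suc_shift) (simp only: coeff_lin_mult0 coeff_lin_multS)
  have "n2 D ([:b,a:]*h) - n2 D ([:cnj a, cnj b:]*h) =
     ((cmod (b * coeff h 0))^2 - (cmod (cnj a * coeff h 0))^2) + (\<Sum>j\<le>m. (cmod b^2 - cmod a^2)*(cmod (coeff h (Suc j))^2 - cmod (coeff h j)^2))"
    unfolding e by (simp add: sum_subtractf[symmetric] term_id)
  also have "\<dots> = (cmod b^2 - cmod a^2) * (cmod (coeff h 0))^2 + (cmod b^2 - cmod a^2) * (\<Sum>j\<le>m. (cmod (coeff h (Suc j))^2 - cmod (coeff h j)^2))"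
    by (simp add: norm_mult power_mult_distrib algebra_simps sum_distrib_left)
  also have "(\<Sum>j\<le>m. (cmod (coeff h (Suc j))^2 - cmod (coeff h j)^2)) = cmod (coeff h (Suc m))^2 - cmod (coeff h 0)^2"
    using sum_Suc_diff[of 0 m "\<lambda>j. cmod (coeff h j)^2"] by (simp add: atMost_atLeast0)
  finally show ?thesis using hD by (simp add: algebra_simps)
qed

definition flipf :: "complex \<Rightarrow> complex \<Rightarrow> complex poly" where
  "flipf b a = (if cmod b \<le> cmod a then [:b,a:] else [:cnj a, cnj b:])"

lemma n2_flipf: "degree h < D \<Longrightarrow> n2 D ([:b,a:]*h) = n2 D (flipf b a * h)"
  using flip[of h D b a] by (simp add: flipf_def)

lemma degree_prod_lin:
  assumes "finite I" "\<And>i. i \<in> I \<Longrightarrow> degree (F i) \<le> 1"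
  shows "degree (\<Prod>i\<in>I. (F i :: complex poly)) \<le> card I"
proof -
  have "degree (\<Prod>i\<in>I. F i) \<le> sum (degree \<circ> F) I" by (rule degree_prod_sum_le[OF assms(1)])
  also have "\<dots> \<le> sum (\<lambda>_. 1) I" by (rule sum_mono) (use assms in auto)
  finally show ?thesis by simp
qed

lemma degree_flipf: "degree (flipf b a) \<le> 1"
  unfolding flipf_def by auto

lemma landau_gen:
  assumes "finite I"
  shows "degree h + card I \<le> D \<Longrightarrow> n2 D ((\<Prod>i\<in>I. [:b i, a i:]) * h) = n2 D ((\<Prod>i\<in>I. flipf (b i) (a i)) * h)"
  using assms
proof (induction I arbitrary: h rule: finite_induct)
  case empty then show ?case by simp
next
  case (insert j I)
  have dI: "degree (\<Prod>i\<in>I. [:b i, a i:]) \<le> card I"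
    by (rule degree_prod_lin) (use insert in auto)
  have d1: "degree ((\<Prod>i\<in>I. [:b i, a i:]) * h) < D"
    using insert dI degree_mult_le[of "(\<Prod>i\<in>I. [:b i, a i:])" h] by auto
  have "n2 D ((\<Prod>i\<in>insert j I. [:b i, a i:]) * h) = n2 D ([:b j, a j:] * ((\<Prod>i\<in>I. [:b i, a i:]) * h))"
    by (simp only: prod.insert[OF insert(1,2)] mult.assoc)
  also have "\<dots> = n2 D (flipf (b j) (a j) * ((\<Prod>i\<in>I. [:b i, a i:]) * h))"
    by (rule n2_flipf[OF d1])
  also have "\<dots> = n2 D ((\<Prod>i\<in>I. [:b i, a i:]) * (flipf (b j) (a j) * h))"
    by (simp add: ac_simps)
  also have "\<dots> = n2 D ((\<Prod>i\<in>I. flipf (b i) (a i)) * (flipf (b j) (a j) * h))"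
  proof (rule insert.IH)
    show "degree (flipf (b j) (a j) * h) + card I \<le> D"
      using insert degree_mult_le[of "flipf (b j) (a j)" h] degree_flipf[of "b j" "a j"] by auto
  qed
  also have "\<dots> = n2 D ((\<Prod>i\<in>insert j I. flipf (b i) (a i)) * h)"
    using insert by (simp add: ac_simps)
  finally show ?case .
qed

lemma coeff_prod_lin_top:
  fixes a b :: "'i \<Rightarrow> complex"
  assumes "finite I"
  shows "coeff (\<Prod>i\<in>I. [:b i, a i:]) (card I) = (\<Prod>i\<in>I. a i)"
  using assms
proof (induction I rule: finite_induct)
  case empty then show ?case by simp
next
  case (insert j I)
  have dI: "degree (\<Prod>i\<in>I. [:b i, a i:]) \<le> card I"
    by (rule degree_prod_lin) (use insert in auto)
  hence "coeff (\<Prod>i\<in>I. [:b i, a i:]) (Suc (card I)) = 0" by (simp add: coeff_eq_0)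
  then show ?case using insert by (simp add: coeff_lin_multS)
qed

lemma landau:
  assumes "finite I" "card I \<le> D"
  shows "n2 D (\<Prod>i\<in>I. [:b i, a i:]) \<ge> (\<Prod>i\<in>I. (max (cmod (a i)) (cmod (b i)))^2)"
proof -
  define b' where "b' i = coeff (flipf (b i) (a i)) 0" for i
  define a' where "a' i = coeff (flipf (b i) (a i)) 1" for i
  have ba: "\<And>i. flipf (b i) (a i) = [:b' i, a' i:]" "\<And>i. cmod (a' i) = max (cmod (a i)) (cmod (b i))"
    unfolding a'_def b'_def flipf_def by auto
  have "n2 D (\<Prod>i\<in>I. [:b i, a i:]) = n2 D (\<Prod>i\<in>I. [:b' i, a' i:])"
    using landau_gen[OF assms(1), of 1 D b a] assms ba by simp
  also have "\<dots> \<ge> (cmod (coeff (\<Prod>i\<in>I. [:b' i, a' i:]) (card I)))^2"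
    unfolding n2_def by (rule member_le_sum) (use assms in auto)
  also have "(cmod (coeff (\<Prod>i\<in>I. [:b' i, a' i:]) (card I)))^2 = (\<Prod>i\<in>I. (max (cmod (a i)) (cmod (b i)))^2)"
  proof -
    have "cmod (coeff (\<Prod>i\<in>I. [:b' i, a' i:]) (card I)) = (\<Prod>i\<in>I. cmod (a' i))"
      by (simp only: coeff_prod_lin_top[OF assms(1)] prod_norm)
    then show ?thesis by (simp only: ba(2) prod_power_distrib)
  qed
  finally show ?thesis .
qed

lemma coeff_scaled:
  fixes z :: "'i \<Rightarrow> complex" and s r :: complex
  assumes "finite I"
  shows "k \<le> card I \<Longrightarrow> coeff (\<Prod>i\<in>I. [:-(z i * r), s:]) k = coeff (\<Prod>i\<in>I. [:-z i, 1:]) k * s^k * r^(card I - k)"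
  using assms
proof (induction I arbitrary: k rule: finite_induct)
  case empty then show ?case by simp
next
  case (insert j I)
  define Q where "Q = (\<Prod>i\<in>I. [:-(z i * r), s:])"
  define P where "P = (\<Prod>i\<in>I. [:-z i, 1:])"
  have cI: "card (insert j I) = Suc (card I)" using insert by simp
  have eQ: "(\<Prod>i\<in>insert j I. [:-(z i * r), s:]) = [:-(z j * r), s:] * Q"
    unfolding Q_def by (simp only: prod.insert[OF insert(1,2)])
  have eP: "(\<Prod>i\<in>insert j I. [:-z i, 1:]) = [:-z j, 1:] * P"
    unfolding P_def by (simp only: prod.insert[OF insert(1,2)])
  have dQ: "degree Q \<le> card I" unfolding Q_def by (rule degree_prod_lin) (use insert in auto)
  have dP: "degree P \<le> card I" unfolding P_def by (rule degree_prod_lin) (use insert in auto)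
  have IH: "m \<le> card I \<Longrightarrow> coeff Q m = coeff P m * s^m * r^(card I - m)" for m
    unfolding Q_def P_def by (rule insert.IH) (use insert in auto)
  show ?case
  proof (cases k)
    case 0
    then show ?thesis unfolding eQ eP cI using IH[of 0] by (simp add: coeff_lin_mult0)
  next
    case (Suc m)
    have mle: "m \<le> card I" using insert(4) Suc cI by simp
    show ?thesis
    proof (cases "Suc m \<le> card I")
      case True
      have e1: "r ^ (Suc (card I) - Suc m) = r * r ^ (card I - Suc m)"
      proof -
        have "Suc (card I) - Suc m = Suc (card I - Suc m)" using True by simp
        then show ?thesis by simp
      qed
      have e2: "r ^ (card I - m) = r * r ^ (card I - Suc m)"
      proof -
        have "card I - m = Suc (card I - Suc m)" using True by simp
        then show ?thesis by simp
      qed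
      show ?thesis unfolding eQ eP cI Suc coeff_lin_multS IH[OF True] IH[OF mle] e1 e2
        by (simp add: algebra_simps)
    next
      case False
      hence m: "m = card I" using mle by simp
      have "coeff Q (Suc m) = 0" using dQ m by (simp add: coeff_eq_0)
      moreover have "coeff P (Suc m) = 0" using dP m by (simp add: coeff_eq_0)
      ultimately show ?thesis unfolding eQ eP cI Suc coeff_lin_multS using IH[OF mle] m
        by (simp add: algebra_simps)
    qed
  qed
qed



lemma cont_xlnx: "continuous_on {0..1} (\<lambda>t::real. t * ln t - t)"
proof -
  have l1: "((\<lambda>x::real. - (ln x / x)) \<longlongrightarrow> 0) at_top"
    using tendsto_minus[OF ln_x_over_x_tendsto_0] by simp
  have l2: "((\<lambda>t::real. - (ln (inverse t) / inverse t)) \<longlongrightarrow> 0) (at_right 0)"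
    using filterlim_compose[OF l1 filterlim_inverse_at_top_right] by (simp add: o_def)
  have l3: "((\<lambda>t::real. t * ln t) \<longlongrightarrow> 0) (at_right 0)"
  proof (rule Lim_transform_eventually[OF l2])
    show "\<forall>\<^sub>F t in at_right 0. - (ln (inverse t) / inverse t) = t * ln (t::real)"
    proof (rule eventually_mono[OF eventually_at_right_less])
      fix t :: real assume t: "0 < t"
      have "ln (inverse t) = - ln t" by (rule ln_inverse)
      moreover have "a / inverse t = a * t" for a :: real by (simp add: divide_inverse)
      ultimately show "- (ln (inverse t) / inverse t) = t * ln t" by simp
    qed
  qed
  have lim: "((\<lambda>t::real. t * ln t - t) \<longlongrightarrow> 0) (at_right 0)"
    using tendsto_diff[OF l3 tendsto_ident_at] by simp
  show ?thesis unfolding continuous_on_def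
  proof
    fix x :: real assume x: "x \<in> {0..1}"
    show "((\<lambda>t. t * ln t - t) \<longlongrightarrow> x * ln x - x) (at x within {0..1})"
    proof (cases "x = 0")
      case True
      have "at (0::real) within {0..1} = at_right 0" by (rule at_within_Icc_at_right) simp
      with lim True show ?thesis by simp
    next
      case False
      with x have "x > 0" by simp
      hence "isCont (\<lambda>t. t * ln t - t) x" by (intro continuous_intros) auto
      hence "continuous (at x within {0..1}) (\<lambda>t. t * ln t - t)"
        by (rule continuous_at_imp_continuous_at_within)
      thus ?thesis unfolding continuous_within .
    qed
  qed
qed

lemma log_int:
  fixes B :: real
  assumes "0 \<le> B" "B < 1"
  shows "((\<lambda>t. ln (max ((1-B)*t) (B*(1-t)))) has_integral -1) {0..1}"
proof (cases "B = 0")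
  case True
  have "((\<lambda>t. ln (max ((1-B)*t) (B*(1-t)))) has_integral ((1 * ln 1 - 1) - (0 * ln 0 - 0))) {0..1}"
  proof (rule fundamental_theorem_of_calculus_interior)
    show "continuous_on {0..1} (\<lambda>t::real. t * ln t - t)" by (rule cont_xlnx)
    fix x :: real assume x: "x \<in> {0<..<1}"
    show "((\<lambda>t. t * ln t - t) has_vector_derivative ln (max ((1-B)*x) (B*(1-x)))) (at x)"
      using x True unfolding has_real_derivative_iff_has_vector_derivative[symmetric]
      by (auto intro!: derivative_eq_intros)
  qed simp
  then show ?thesis by simp
next
  case False
  hence Bp: "B > 0" using assms by simp
  define A where "A = 1 - B"
  have Ap: "A > 0" using assms A_def by simp
  define F1 where "F1 t = -(1-t)*(ln B + ln(1-t)) - t" for t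
  define F2 where "F2 t = t*ln(A*t) - t" for t
  have i1: "((\<lambda>t. ln (max ((1-B)*t) (B*(1-t)))) has_integral (F1 B - F1 0)) {0..B}"
  proof (rule fundamental_theorem_of_calculus_interior)
    show "0 \<le> B" using Bp by simp
    have "\<forall>x\<in>{0..B}. (1-x) > 0" using Bp assms by auto
    then show "continuous_on {0..B} F1" unfolding F1_def by (intro continuous_intros) auto
    fix x :: real assume x: "x \<in> {0<..<B}"
    have m: "max ((1-B)*x) (B*(1-x)) = B*(1-x)" using x assms by (auto simp: algebra_simps)
    have x1: "1-x > 0" using x assms by auto
    have "(F1 has_real_derivative (ln B + ln(1-x))) (at x)"
      unfolding F1_def using x1 
    proof (auto intro!: derivative_eq_intros)
      assume "x < 1" then have "1 - x \<noteq> 0" by simp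
      then show "(x - 1) / (1 - x) = - 1"
        by (metis divide_minus_left divide_self minus_diff_eq)
    qed
    moreover have "ln B + ln(1-x) = ln (B*(1-x))" using x1 Bp by (simp add: ln_mult)
    ultimately show "(F1 has_vector_derivative ln (max ((1-B)*x) (B*(1-x)))) (at x)"
      unfolding m has_real_derivative_iff_has_vector_derivative[symmetric] by simp
  qed
  have i2: "((\<lambda>t. ln (max ((1-B)*t) (B*(1-t)))) has_integral (F2 1 - F2 B)) {B..1}"
  proof (rule fundamental_theorem_of_calculus_interior)
    show "B \<le> 1" using assms by simp
    have "\<forall>x\<in>{B..1}. A*x > 0" using Bp Ap by auto
    then show "continuous_on {B..1} F2" unfolding F2_def by (intro continuous_intros) auto
    fix x :: real assume x: "x \<in> {B<..<1}"
    have m: "max ((1-B)*x) (B*(1-x)) = A*x" using x assms unfolding A_def by (auto simp: max_def algebra_simps)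
    have "A*x > 0" using x Ap Bp by auto
    then show "(F2 has_vector_derivative ln (max ((1-B)*x) (B*(1-x)))) (at x)"
      unfolding m F2_def has_real_derivative_iff_has_vector_derivative[symmetric] using x Ap
      by (auto intro!: derivative_eq_intros simp: field_simps)
  qed
  have "((\<lambda>t. ln (max ((1-B)*t) (B*(1-t)))) has_integral ((F1 B - F1 0) + (F2 1 - F2 B))) {0..1}"
    by (rule has_integral_combine[OF _ _ i1 i2]) (use assms in auto)
  moreover have "(F1 B - F1 0) + (F2 1 - F2 B) = -1"
  proof -
    have "ln (1-B) = ln A" "ln (A*B) = ln A + ln B" using Ap Bp A_def by (simp_all add: ln_mult)
    then show ?thesis unfolding F1_def F2_def A_def by (simp add: algebra_simps)
  qed
  ultimately show ?thesis by simp
qed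

lemma jensen_prod:
  fixes B :: "'i \<Rightarrow> real"
  assumes fin: "finite I" and B: "\<And>i. i \<in> I \<Longrightarrow> 0 \<le> B i \<and> B i < 1"
  shows "((\<lambda>t. \<Prod>i\<in>I. max ((1-B i)*t) (B i*(1-t))) has_integral
           integral {0..1} (\<lambda>t. \<Prod>i\<in>I. max ((1-B i)*t) (B i*(1-t)))) {0..1}
         \<and> exp (- real (card I)) \<le> integral {0..1} (\<lambda>t. \<Prod>i\<in>I. max ((1-B i)*t) (B i*(1-t)))"
proof -
  define n where "n = real (card I)"
  define G where "G t = (\<Sum>i\<in>I. ln (max ((1-B i)*t) (B i*(1-t))))" for t
  define L where "L t = exp (-n) * (1 + G t + n)" for t
  define L' where "L' t = (if t = 0 then 0 else L t)" for t
  define F where "F t = (\<Prod>i\<in>I. max ((1-B i)*t) (B i*(1-t)))" for t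
  have hG: "(G has_integral (\<Sum>i\<in>I. -1)) {0..1}"
    unfolding G_def by (rule has_integral_sum[OF fin]) (use B log_int in auto)
  have h1: "((\<lambda>t. 1 + n) has_integral (1 + n)) {0..1::real}"
    using has_integral_const_real[of "1+n" 0 1] by simp
  have hL: "(L has_integral exp (-n)) {0..1}"
  proof -
    have "((\<lambda>t. exp (-n) * ((1 + n) + G t)) has_integral exp (-n) * ((1+n) + (\<Sum>i\<in>I. -1))) {0..1}"
      by (intro has_integral_mult_right has_integral_add h1 hG)
    moreover have "exp (-n) * ((1+n) + (\<Sum>i\<in>I. -1::real)) = exp (-n)" unfolding n_def by simp
    ultimately show ?thesis unfolding L_def by (simp add: ac_simps)
  qed
  have hL': "(L' has_integral exp (-n)) {0..1}"
    by (rule has_integral_spike_finite[of "{0}" _ _ L]) (use hL in \<open>auto simp: L'_def\<close>)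
  have contF: "continuous_on {0..1} F" unfolding F_def by (intro continuous_intros)
  hence hF: "(F has_integral integral {0..1} F) {0..1}"
    using integrable_continuous_real integrable_integral by blast
  have le: "L' t \<le> F t" if t: "t \<in> {0..1}" for t
  proof (cases "t = 0")
    case True
    have "F t \<ge> 0" unfolding F_def using B True by (intro prod_nonneg) auto
    then show ?thesis using True by (simp add: L'_def)
  next
    case False
    with t have tp: "t > 0" by simp
    have pos: "max ((1-B i)*t) (B i*(1-t)) > 0" if "i \<in> I" for i
    proof -
      have "0 < (1 - B i) * t" using B[OF that] tp by simp
      then show ?thesis by (simp add: less_max_iff_disj)
    qed
    have "exp (G t) = F t" unfolding G_def F_def exp_sum[OF fin]
      by (rule prod.cong) (use pos in auto)
    moreover have "exp (G t) \<ge> exp (-n) * (1 + G t + n)"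
    proof -
      have "exp (G t) = exp (-n) * exp (G t + n)" by (simp add: exp_add[symmetric])
      moreover have "exp (G t + n) \<ge> 1 + (G t + n)" by (rule exp_ge_add_one_self)
      ultimately show ?thesis by (simp add: ac_simps)
    qed
    ultimately show ?thesis using False by (simp add: L'_def L_def)
  qed
  have "exp (-n) \<le> integral {0..1} F" by (rule has_integral_le[OF hL' hF le])
  then show ?thesis using hF unfolding F_def n_def by simp
qed



lemma beta_int:
  assumes "k \<le> N"
  shows "((\<lambda>t::real. t^k * (1-t)^(N-k)) has_integral (fact k * fact (N-k) / fact (Suc N))) {0..1}"
proof -
  have h: "((\<lambda>t. t powr (real k + 1 - 1) * (1 - t) powr (real (N-k) + 1 - 1)) has_integral Beta (real k + 1) (real (N-k) + 1)) {0..1}"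
    by (rule has_integral_Beta_real) auto
  have "Beta (real k + 1) (real (N-k) + 1) = fact k * fact (N-k) / fact (Suc N)"
  proof -
    have e: "real k + 1 + (real (N - k) + 1) = 1 + real (Suc N)" using assms by simp
    show ?thesis unfolding Beta_def e
      using Gamma_fact[of k, where 'a=real] Gamma_fact[of "N-k", where 'a=real] Gamma_fact[of "Suc N", where 'a=real]
      by (simp add: add.commute)
  qed
  with h have h2: "((\<lambda>t. t powr (real k) * (1 - t) powr (real (N-k))) has_integral (fact k * fact (N-k) / fact (Suc N))) {0<..<1}"
    by (simp add: has_integral_Icc_iff_Ioo)
  have "((\<lambda>t::real. t^k * (1-t)^(N-k)) has_integral (fact k * fact (N-k) / fact (Suc N))) {0<..<1}"
    by (rule has_integral_spike_finite[OF _ _ h2, of "{}"]) (auto simp: powr_realpow)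
  then show ?thesis by (simp add: has_integral_Icc_iff_Ioo)
qed

lemma max_sq: "0 \<le> a \<Longrightarrow> 0 \<le> (b::real) \<Longrightarrow> (max a b)^2 = max (a^2) (b^2)"
  by (cases "a \<le> b") (auto simp: max_def power_mono intro: antisym dest: power_mono[of _ _ 2])

lemma sqrt_pow_sq: "0 \<le> t \<Longrightarrow> (sqrt t ^ k)^2 = (t::real)^k"
proof -
  assume t: "0 \<le> t"
  have "(sqrt t ^ k)^2 = (sqrt t ^ 2)^k" by (simp only: power_mult[symmetric] mult.commute)
  then show ?thesis using t by simp
qed

lemma pointwise:
  fixes z :: "nat \<Rightarrow> complex" and t :: real
  assumes t: "0 \<le> t" "t \<le> 1"
  shows "(\<Prod>i\<in>{1..N}. max t ((cmod (z i))^2 * (1-t)))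
     \<le> (\<Sum>k\<le>N. (cmod (coeff (\<Prod>i\<in>{1..N}. [:-z i, 1:]) k))^2 * (t^k * (1-t)^(N-k)))"
proof -
  define s where "s = complex_of_real (sqrt t)"
  define r where "r = complex_of_real (sqrt (1-t))"
  have cI: "card {1..N} = N" by simp
  have L: "n2 N (\<Prod>i\<in>{1..N}. [:-(z i * r), s:]) \<ge> (\<Prod>i\<in>{1..N}. (max (cmod s) (cmod (-(z i * r))))^2)"
    by (rule landau) auto
  have e1: "(max (cmod s) (cmod (-(z i * r))))^2 = max t ((cmod (z i))^2 * (1-t))" for i
  proof -
    have "(max (cmod s) (cmod (-(z i * r))))^2 = max ((cmod s)^2) ((cmod (z i * r))^2)"
      using max_sq[of "cmod s" "cmod (z i * r)"] by simp
    also have "(cmod s)^2 = t" unfolding s_def using t by simp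
    also have "(cmod (z i * r))^2 = (cmod (z i))^2 * (1-t)" unfolding r_def using t
      by (simp add: norm_mult power_mult_distrib)
    finally show ?thesis .
  qed
  have e2: "n2 N (\<Prod>i\<in>{1..N}. [:-(z i * r), s:]) = (\<Sum>k\<le>N. (cmod (coeff (\<Prod>i\<in>{1..N}. [:-z i, 1:]) k))^2 * (t^k * (1-t)^(N-k)))"
    unfolding n2_def
  proof (rule sum.cong[OF refl])
    fix k assume k: "k \<in> {..N}"
    have "coeff (\<Prod>i\<in>{1..N}. [:-(z i * r), s:]) k = coeff (\<Prod>i\<in>{1..N}. [:-z i, 1:]) k * s^k * r^(N-k)"
      using coeff_scaled[of "{1..N}" k z r s] k by simp
    moreover have "cmod s = sqrt t" "cmod r = sqrt (1-t)" unfolding s_def r_def using t by auto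
    ultimately show "(cmod (coeff (\<Prod>i\<in>{1..N}. [:-(z i * r), s:]) k))^2 = (cmod (coeff (\<Prod>i\<in>{1..N}. [:-z i, 1:]) k))^2 * (t^k * (1-t)^(N-k))"
      using t by (simp add: norm_mult norm_power power_mult_distrib sqrt_pow_sq)
  qed
  show ?thesis using L unfolding e1 e2 .
qed



lemma bw_lin: "bw_norm [:- a, 1:] = sqrt (1 + (cmod a)^2)"
  unfolding bw_norm_def by simp

lemma sqrt_prod_eq: "sqrt (prod f I) = prod (\<lambda>i. sqrt (f i)) I"
  by (induction I rule: infinite_finite_induct) (auto simp: real_sqrt_mult)

lemma aux: "a \<noteq> 0 \<Longrightarrow> f \<noteq> 0 \<Longrightarrow> g \<noteq> 0 \<Longrightarrow> (x::real) / (f / g) = a * (x * (g / (a * f)))"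
  by (simp add: field_simps)

theorem theorem1p2:
  fixes N :: nat and z :: "nat \<Rightarrow> complex"
  assumes "N \<ge> 1"
  shows "(\<Prod>i=1..N. bw_norm [:- z i, 1:])
    \<le> sqrt (exp (real N) / (real N + 1)) * bw_norm (\<Prod>i=1..N. [:- z i, 1:])"
proof -
  define I where "I = {1..N}"
  define P where "P = (\<Prod>i\<in>I. [:- z i, 1:])"
  define c where "c i = (cmod (z i))^2" for i
  define Bf where "Bf i = c i / (1 + c i)" for i
  have fin: "finite I" and cI: "card I = N" unfolding I_def by auto
  have cnn: "c i \<ge> 0" for i unfolding c_def by simp
  have dP: "degree P = N"
  proof (rule antisym)
    show "degree P \<le> N" unfolding P_def using degree_prod_lin[OF fin, of "\<lambda>i. [:- z i, 1:]"] cI by simp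
    have "coeff P N = 1" unfolding P_def using coeff_prod_lin_top[OF fin, of "\<lambda>i. - z i" "\<lambda>_. 1"] cI by simp
    then show "N \<le> degree P" by (intro le_degree) simp
  qed
  define S where "S t = (\<Sum>k\<le>N. (cmod (coeff P k))^2 * (t^k * (1-t)^(N-k)))" for t :: real
  define V where "V = (\<Sum>k\<le>N. (cmod (coeff P k))^2 * (fact k * fact (N-k) / fact (Suc N)) :: real)"
  have hS: "(S has_integral V) {0..1}"
    unfolding S_def V_def by (intro has_integral_sum has_integral_mult_right beta_int) auto
  have bw2: "(bw_norm P)^2 = (real N + 1) * V"
  proof -
    have "(bw_norm P)^2 = (\<Sum>k\<le>N. (cmod (coeff P k))^2 / real (N choose k))"
      unfolding bw_norm_def dP by (simp add: sum_nonneg)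
    also have "\<dots> = (real N + 1) * V" unfolding V_def sum_distrib_left
    proof (rule sum.cong[OF refl])
      fix k assume k: "k \<in> {..N}"
      have b: "real (N choose k) = fact N / (fact k * fact (N-k))" using k by (simp add: binomial_fact)
      have f: "(fact (Suc N) :: real) = (real N + 1) * fact N" by simp
      have nz: "(fact N :: real) \<noteq> 0" "(fact k :: real) \<noteq> 0" "(fact (N-k) :: real) \<noteq> 0" "real N + 1 \<noteq> 0" by auto
      show "(cmod (coeff P k))^2 / real (N choose k) = (real N + 1) * ((cmod (coeff P k))^2 * (fact k * fact (N-k) / fact (Suc N)))"
        unfolding b f using aux[OF nz(4) nz(1), of "fact k * fact (N-k)" "(cmod (coeff P k))^2"] nz by simp
    qed
    finally show ?thesis .
  qed
  have Bf: "0 \<le> Bf i \<and> Bf i < 1" for i unfolding Bf_def using cnn[of i] by auto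
  obtain J where hJ: "((\<lambda>t. \<Prod>i\<in>I. max ((1-Bf i)*t) (Bf i*(1-t))) has_integral J) {0..1}"
    and J: "exp (- real N) \<le> J"
    using jensen_prod[OF fin, of Bf] Bf cI by blast
  define C where "C = (\<Prod>i\<in>I. 1 + c i)"
  have Cpos: "C > 0" unfolding C_def using cnn by (intro prod_pos) (auto intro: add_pos_nonneg)
  have hH: "((\<lambda>t. \<Prod>i\<in>I. max t (c i * (1-t))) has_integral (C * J)) {0..1}"
  proof -
    have eq: "(\<Prod>i\<in>I. max t (c i * (1-t))) = C * (\<Prod>i\<in>I. max ((1-Bf i)*t) (Bf i*(1-t)))" for t
    proof -
      have "max t (c i * (1-t)) = (1 + c i) * max ((1-Bf i)*t) (Bf i*(1-t))" for i
      proof -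
        have p: "1 + c i > 0" using cnn[of i] by (simp add: add_pos_nonneg)
        have "1 - Bf i = 1 / (1 + c i)" unfolding Bf_def using p by (simp add: field_simps)
        then have "(1 + c i) * max ((1-Bf i)*t) (Bf i*(1-t)) = max ((1 + c i) * ((1-Bf i)*t)) ((1 + c i) * (Bf i*(1-t)))"
          using p by (simp add: max_mult_distrib_left)
        also have "\<dots> = max t (c i * (1-t))"
        proof -
          have "(1 + c i) * ((1-Bf i)*t) = t" using \<open>1 - Bf i = 1 / (1 + c i)\<close> p by simp
          moreover have "(1 + c i) * (Bf i*(1-t)) = c i * (1-t)" unfolding Bf_def using p by simp
          ultimately show ?thesis by (simp only:)
        qed
        finally show ?thesis by simp
      qed
      then show ?thesis unfolding C_def by (simp add: prod.distrib)
    qed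
    show ?thesis unfolding eq by (rule has_integral_mult_right[OF hJ])
  qed
  have "C * J \<le> V"
    by (rule has_integral_le[OF hH hS]) (use pointwise[where z=z and N=N] in \<open>auto simp: S_def P_def I_def c_def\<close>)
  moreover have "C * exp (- real N) \<le> C * J" using J Cpos by simp
  ultimately have CV: "C * exp (- real N) \<le> V" by linarith
  have lhs: "(\<Prod>i=1..N. bw_norm [:- z i, 1:]) = sqrt C"
    unfolding C_def I_def c_def bw_lin by (simp add: sqrt_prod_eq add.commute)
  have "C \<le> exp (real N) / (real N + 1) * (bw_norm P)^2"
  proof -
    have "C = exp (real N) * (C * exp (- real N))" by (simp add: exp_minus field_simps)
    also have "\<dots> \<le> exp (real N) * V" using CV by simp
    also have "\<dots> = exp (real N) / (real N + 1) * (bw_norm P)^2" unfolding bw2 by (simp add: field_simps)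
    finally show ?thesis .
  qed
  then have "sqrt C \<le> sqrt (exp (real N) / (real N + 1) * (bw_norm P)^2)" by (rule real_sqrt_le_mono)
  also have "\<dots> = sqrt (exp (real N) / (real N + 1)) * bw_norm P"
  proof -
    have "bw_norm P \<ge> 0" unfolding bw_norm_def by (simp add: sum_nonneg)
    then show ?thesis by (simp only: real_sqrt_mult real_sqrt_abs abs_of_nonneg)
  qed
  finally show ?thesis unfolding lhs P_def I_def .
qed

end
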